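(* Let $k\ge 2$. For every $n\ge 2k$ there are weighted $k$-uniform hypergraphs $w_1,\ldots,w_k:[n]^{(k)}\to\mathbb{R}$ such that, for every $i$, $w_i([n])=0$ and $\|w_i\|_1=\binom nk$, and such that for all $1\le i<j\le k$ we have $$\operatorname{disc}(w_i,w_j)=0.$$
   Context: $[n]=\{1,\ldots,n\}$ and $V^{(k)}$ denotes the family of $k$-element subsets of $V$. A weighted $k$-uniform hypergraph on $V$ is a function $w:V^{(k)}\to\mathbb{R}$; $w(S)=\sum_{e\in S^{(k)}}w(e)$ for $S\subseteq V$, $\|w\|_1=\sum_{e}|w(e)|$, $\langle w,u\rangle=\sum_{e\in V^{(k)}}w(e)u(e)$, and the density is $d(w)=w(V)/\binom{|V|}{k}$. For a permutation $\pi$ of $V$, $w_\pi(e)=w(\pi^{-1}(e))$. With $n=|V|$, $\operatorname{disc}^+(w,u)=\max_\pi\langle w_\pi,u\rangle-d(w)d(u)\binom nk$, $\operatorname{disc}^-(w,u)=d(w)d(u)\binom nk-\min_\pi\langle w_\pi,u\rangle$ (maxima/minima over all permutations $\pi$ of $V$), and $\operatorname{disc}(w,u)=\max\{\operatorname{disc}^+(w,u),\operatorname{disc}^-(w,u)\}=\max_\pi|\langle w_\pi,u\rangle-d(w)d(u)\binom nk|$. *)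

theory Defs
  imports "HOL-Analysis.Analysis" "HOL-Combinatorics.Permutations"
begin

text \<open>A weighted k-uniform hypergraph on a finite vertex set V is a function
  on k-element subsets of V; we represent it as a function on all sets, only
  its values on the k-subsets of V matter.\<close>

definition ksubsets :: "'a set \<Rightarrow> nat \<Rightarrow> 'a set set" where
  "ksubsets V k = {e. e \<subseteq> V \<and> card e = k}"

definition wtot :: "'a set \<Rightarrow> nat \<Rightarrow> ('a set \<Rightarrow> real) \<Rightarrow> real" where
  "wtot V k w = (\<Sum>e\<in>ksubsets V k. w e)"

definition l1norm :: "'a set \<Rightarrow> nat \<Rightarrow> ('a set \<Rightarrow> real) \<Rightarrow> real" where
  "l1norm V k w = (\<Sum>e\<in>ksubsets V k. \<bar>w e\<bar>)"

definition hinner :: "'a set \<Rightarrow> nat \<Rightarrow> ('a set \<Rightarrow> real) \<Rightarrow> ('a set \<Rightarrow> real) \<Rightarrow> real" where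
  "hinner V k w u = (\<Sum>e\<in>ksubsets V k. w e * u e)"

definition density :: "'a set \<Rightarrow> nat \<Rightarrow> ('a set \<Rightarrow> real) \<Rightarrow> real" where
  "density V k w = wtot V k w / real (card V choose k)"

definition permute_hg :: "('a \<Rightarrow> 'a) \<Rightarrow> ('a set \<Rightarrow> real) \<Rightarrow> ('a set \<Rightarrow> real)" where
  "permute_hg \<pi> w = (\<lambda>e. w (inv \<pi> ` e))"

definition disc :: "'a set \<Rightarrow> nat \<Rightarrow> ('a set \<Rightarrow> real) \<Rightarrow> ('a set \<Rightarrow> real) \<Rightarrow> real" where
  "disc V k w u = Max ((\<lambda>\<pi>. \<bar>hinner V k (permute_hg \<pi> w) u
      - density V k w * density V k u * real (card V choose k)\<bar>) ` {\<pi>. \<pi> permutes V})"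

end

theory Submission
  imports Defs
begin

definition ind :: "nat \<Rightarrow> nat set \<Rightarrow> real" where
  "ind x e = (if x \<in> e then 1 else 0)"

definition pw :: "nat \<Rightarrow> nat set \<Rightarrow> real" where
  "pw j e = (\<Prod>t\<in>{1..j}. ind (2*t-1) e - ind (2*t) e)"

lemma finite_ksub: "finite (ksubsets {1..n::nat} k)"
  unfolding ksubsets_def by (rule finite_subset[of _ "Pow {1..n}"]) auto

lemma exists_free_pair:
  assumes "finite T" "card T < j"
  shows "\<exists>t\<in>{1..j}. 2*t-1 \<notin> T \<and> 2*t \<notin> T"
proof (rule ccontr)
  assume nt: "\<not> ?thesis"
  hence "{1..j} \<subseteq> (\<lambda>x. (x+1) div 2) ` T"
  proof (intro subsetI)
    fix t assume t: "t \<in> {1..j}"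
    with nt have "2*t-1 \<in> T \<or> 2*t \<in> T" by auto
    thus "t \<in> (\<lambda>x. (x+1) div 2) ` T"
    proof
      assume "2*t-1 \<in> T" moreover have "t = (2*t-1+1) div 2" using t by auto
      ultimately show ?thesis by blast
    next
      assume "2*t \<in> T" moreover have "t = (2*t+1) div 2" by auto
      ultimately show ?thesis by blast
    qed
  qed
  hence "card {1..j} \<le> card ((\<lambda>x. (x+1) div 2) ` T)"
    using assms by (intro card_mono) auto
  also have "\<dots> \<le> card T" by (rule card_image_le) (rule assms)
  finally show False using assms by simp
qed

lemma base:
  assumes "finite T" "card T < j" "2*j \<le> n"
  shows "(\<Sum>e\<in>ksubsets {1..n} k. if T \<subseteq> e then pw j e else 0) = 0"
proof -
  obtain t where t: "t \<in> {1..j}" "2*t-1 \<notin> T" "2*t \<notin> T"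
    using exists_free_pair[OF assms(1,2)] by blast
  define s where "s = Transposition.transpose (2*t-1) (2*t)"
  define A where "A = ksubsets {1..n} k"
  define f where "f = (\<lambda>e. if T \<subseteq> e then pw j e else 0)"
  have ss: "s (s x) = x" for x unfolding s_def by simp
  have mem: "x \<in> s ` e \<longleftrightarrow> s x \<in> e" for x e
    unfolding s_def by (rule in_transpose_image_iff)
  have bij: "bij_betw ((`) s) A A"
  proof (rule bij_betw_byWitness[where f'="(`) s"])
    show "\<forall>a\<in>A. s ` s ` a = a" using ss by (auto simp: image_image)
    show "\<forall>a\<in>A. s ` s ` a = a" using ss by (auto simp: image_image)
    have "s ` {1..n} = {1..n}" unfolding s_def using t assms by (intro transpose_image_eq) auto
    moreover have "inj s" unfolding s_def by (rule inj_transpose)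
    ultimately show "(`) s ` A \<subseteq> A" "(`) s ` A \<subseteq> A"
      unfolding A_def ksubsets_def by (auto simp: card_image inj_on_subset image_mono)
  qed
  have Ts: "T \<subseteq> s ` e \<longleftrightarrow> T \<subseteq> e" for e
  proof -
    have "s x = x" if "x \<in> T" for x unfolding s_def using that t by (metis transpose_apply_other)
    thus ?thesis using mem by (metis subset_iff)
  qed
  have neg: "pw j (s ` e) = - pw j e" for e
  proof -
    have fac: "ind (2*u-1) (s ` e) - ind (2*u) (s ` e) = ind (2*u-1) e - ind (2*u) e"
      if "u \<in> {1..j} - {t}" for u
    proof -
      have "s (2*u-1) = 2*u-1" "s (2*u) = 2*u" unfolding s_def using that t by auto
      thus ?thesis unfolding ind_def using mem by simp
    qed
    have "s (2*t-1) = 2*t" "s (2*t) = 2*t-1" unfolding s_def by auto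
    hence fact: "ind (2*t-1) (s ` e) - ind (2*t) (s ` e) = - (ind (2*t-1) e - ind (2*t) e)"
      unfolding ind_def using mem by simp
    have "pw j (s ` e) = (ind (2*t-1) (s ` e) - ind (2*t) (s ` e)) *
        (\<Prod>u\<in>{1..j}-{t}. ind (2*u-1) (s ` e) - ind (2*u) (s ` e))"
      unfolding pw_def using t by (simp add: prod.remove)
    also have "\<dots> = - (ind (2*t-1) e - ind (2*t) e) * (\<Prod>u\<in>{1..j}-{t}. ind (2*u-1) e - ind (2*u) e)"
      using fac fact by (metis (no_types, lifting) prod.cong)
    also have "\<dots> = - pw j e" unfolding pw_def using t by (simp add: prod.remove algebra_simps)
    finally show ?thesis .
  qed
  have "sum f A = sum (f \<circ> (`) s) A" using sum.reindex_bij_betw[OF bij, of f] by simp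
  also have "\<dots> = - sum f A" unfolding f_def using Ts neg by (auto simp add: sum_negf[symmetric] intro!: sum.cong)
  finally have "sum f A = 0" by simp
  thus ?thesis unfolding f_def A_def .
qed

lemma key:
  assumes "finite I"
  shows "finite T \<Longrightarrow> card I + card T < j \<Longrightarrow> 2*j \<le> n \<Longrightarrow>
    (\<Sum>e\<in>ksubsets {1..n} k. if T \<subseteq> e then (\<Prod>t\<in>I. ind (c t) e - ind (d t) e) * pw j e else 0) = 0"
  using assms
proof (induction I arbitrary: T rule: finite_induct)
  case empty
  thus ?case unfolding prod.empty mult_1 using base[of T j n k] by simp
next
  case (insert x F)
  let ?Q = "\<lambda>e. (\<Prod>t\<in>F. ind (c t) e - ind (d t) e) * pw j e"
  have eq: "(if T \<subseteq> e then (\<Prod>t\<in>insert x F. ind (c t) e - ind (d t) e) * pw j e else 0)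
      = (if insert (c x) T \<subseteq> e then ?Q e else 0) - (if insert (d x) T \<subseteq> e then ?Q e else 0)" for e
    using insert(1,2) by (simp add: ind_def algebra_simps)
  have c1: "card (insert (c x) T) + card F < j" "card (insert (d x) T) + card F < j"
    using insert card_insert_le[of T] by (auto simp: card_insert_if)
  have "(\<Sum>e\<in>ksubsets {1..n} k. if insert (c x) T \<subseteq> e then ?Q e else 0) = 0"
    using insert c1 by (intro insert.IH) auto
  moreover have "(\<Sum>e\<in>ksubsets {1..n} k. if insert (d x) T \<subseteq> e then ?Q e else 0) = 0"
    using insert c1 by (intro insert.IH) auto
  ultimately show ?case by (simp add: eq sum_subtractf)
qed

lemma L_pos:
  assumes "i \<le> k" "2*k \<le> n"
  shows "l1norm {1..n} k (pw i) > 0"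
proof -
  define e0 where "e0 = (\<lambda>t. 2*t-1) ` {1..i} \<union> {2*i+1..k+i}"
  have inj: "inj_on (\<lambda>t::nat. 2*t-1) {1..i}" by (auto simp: inj_on_def)
  have disj: "(\<lambda>t. 2*t-1) ` {1..i} \<inter> {2*i+1..k+i} = {}" by auto
  have "card e0 = i + (k - i)" unfolding e0_def
    using card_Un_disjoint[OF _ _ disj] card_image[OF inj] assms by simp
  hence ce: "card e0 = k" using assms by simp
  have sub: "e0 \<subseteq> {1..n}" unfolding e0_def using assms by auto
  have e0k: "e0 \<in> ksubsets {1..n} k" unfolding ksubsets_def using ce sub by simp
  have in1: "2*t-1 \<in> e0" if "t \<in> {1..i}" for t unfolding e0_def using that by blast
  have in2: "2*t \<notin> e0" if "t \<in> {1..i}" for t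
  proof
    assume "2*t \<in> e0"
    then consider u where "u \<in> {1..i}" "2*t = 2*u-1" | "2*t \<ge> 2*i+1" unfolding e0_def by auto
    thus False using that by cases presburger+
  qed
  have "pw i e0 = 1" unfolding pw_def ind_def using in1 in2 by (simp add: prod.neutral)
  hence "1 \<le> l1norm {1..n} k (pw i)" unfolding l1norm_def
    using member_le_sum[of e0 "ksubsets {1..n} k" "\<lambda>e. \<bar>pw i e\<bar>"] e0k finite_ksub by auto
  thus ?thesis by simp
qed

lemma perm_mem:
  assumes "\<pi> permutes V"
  shows "x \<in> inv \<pi> ` e \<longleftrightarrow> \<pi> x \<in> e"
proof -
  have b: "bij \<pi>" using permutes_bij[OF assms] .
  show ?thesis
  proof
    assume "x \<in> inv \<pi> ` e"
    then obtain y where "y \<in> e" "x = inv \<pi> y" by auto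
    thus "\<pi> x \<in> e" using b by (simp add: bij_inv_eq_iff)
  next
    assume "\<pi> x \<in> e"
    moreover have "x = inv \<pi> (\<pi> x)" using b by (simp add: bij_inv_eq_iff)
    ultimately show "x \<in> inv \<pi> ` e" by blast
  qed
qed

theorem theorem1p1:
  fixes k n :: nat
  assumes "k \<ge> 2" and "n \<ge> 2 * k"
  shows "\<exists>w :: nat \<Rightarrow> nat set \<Rightarrow> real.
           (\<forall>i\<in>{1..k}. wtot {1..n} k (w i) = 0 \<and>
                          l1norm {1..n} k (w i) = real (n choose k)) \<and>
           (\<forall>i j. 1 \<le> i \<and> i < j \<and> j \<le> k \<longrightarrow> disc {1..n} k (w i) (w j) = 0)"
proof -
  define c where "c i = real (n choose k) / l1norm {1..n} k (pw i)" for i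
  define w where "w i e = c i * pw i e" for i e
  have wt: "wtot {1..n} k (w i) = 0" if "1 \<le> i" "i \<le> k" for i
  proof -
    have "(\<Sum>e\<in>ksubsets {1..n} k. if {} \<subseteq> e then pw i e else 0) = 0"
      using base[of "{}" i n k] that assms by simp
    thus ?thesis unfolding wtot_def w_def by (simp add: sum_distrib_left[symmetric])
  qed
  have l1: "l1norm {1..n} k (w i) = real (n choose k)" if "1 \<le> i" "i \<le> k" for i
  proof -
    have L: "l1norm {1..n} k (pw i) > 0" using L_pos[of i k n] that assms by simp
    have "l1norm {1..n} k (w i) = \<bar>c i\<bar> * l1norm {1..n} k (pw i)"
      unfolding l1norm_def w_def by (simp add: abs_mult sum_distrib_left)
    also have "\<dots> = real (n choose k)" unfolding c_def using L by simp
    finally show ?thesis .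
  qed
  have dz: "disc {1..n} k (w i) (w j) = 0" if "1 \<le> i" "i < j" "j \<le> k" for i j
  proof -
    have di: "density {1..n} k (w i) = 0" unfolding density_def using wt[of i] that by simp
    have zero: "hinner {1..n} k (permute_hg \<pi> (w i)) (w j) = 0" if p: "\<pi> permutes {1..n}" for \<pi>
    proof -
      have pe: "permute_hg \<pi> (w i) e = c i * (\<Prod>t\<in>{1..i}. ind (\<pi> (2*t-1)) e - ind (\<pi> (2*t)) e)" for e
        unfolding permute_hg_def w_def pw_def ind_def using perm_mem[OF p] by simp
      have "(\<Sum>e\<in>ksubsets {1..n} k. if {} \<subseteq> e then
          (\<Prod>t\<in>{1..i}. ind (\<pi> (2*t-1)) e - ind (\<pi> (2*t)) e) * pw j e else 0) = 0"
        using key[where I="{1..i}" and T="{}" and j=j and n=n and k=k and c="\<lambda>t. \<pi> (2*t-1)" and d="\<lambda>t. \<pi> (2*t)"] \<open>i < j\<close> \<open>j \<le> k\<close> assms by simp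
      hence "(\<Sum>e\<in>ksubsets {1..n} k.
          (\<Prod>t\<in>{1..i}. ind (\<pi> (2*t-1)) e - ind (\<pi> (2*t)) e) * pw j e) = 0" by simp
      hence "c i * c j * (\<Sum>e\<in>ksubsets {1..n} k.
          (\<Prod>t\<in>{1..i}. ind (\<pi> (2*t-1)) e - ind (\<pi> (2*t)) e) * pw j e) = 0" by simp
      thus ?thesis unfolding hinner_def pe unfolding w_def
        by (simp add: sum_distrib_left algebra_simps)
    qed
    have "(\<lambda>\<pi>. \<bar>hinner {1..n} k (permute_hg \<pi> (w i)) (w j)
      - density {1..n} k (w i) * density {1..n} k (w j) * real (card {1..n} choose k)\<bar>) ` {\<pi>. \<pi> permutes {1..n}} = {0}"
    proof -
      have "id \<in> {\<pi>. \<pi> permutes {1..n}}" by (simp add: permutes_id)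
      hence ne: "{\<pi>. \<pi> permutes {1..n}} \<noteq> {}" by blast
      have "(\<lambda>\<pi>. \<bar>hinner {1..n} k (permute_hg \<pi> (w i)) (w j)
      - density {1..n} k (w i) * density {1..n} k (w j) * real (card {1..n} choose k)\<bar>) ` {\<pi>. \<pi> permutes {1..n}}
        = (\<lambda>_. 0) ` {\<pi>. \<pi> permutes {1..n}}"
        using zero di by (intro image_cong) auto
      also have "\<dots> = {0}" using ne by (simp only: image_constant_conv if_False)
      finally show ?thesis .
    qed
    thus ?thesis unfolding disc_def by simp
  qed
  show ?thesis using wt l1 dz by (intro exI[of _ w]) auto
qed

end
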